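(* Let $k,m\in\mathbb{N}$ with $m<k\le 2m$, $k$ even, and $\gcd(2k+1,2(2m+1))=1$. Let $J_\mu=\{1,\dots,\mu\}$ and define $I_{11}=\{s\in J_m: s=\frac{2n(2m+1)+k-m}{2k+1}\text{ for some }n\in J_{k/2}\}$, $I_{12}=\{s\in J_m: 2m+1-s=\frac{2n(2m+1)+k-m}{2k+1}\text{ for some }n\in\{k/2+1,\dots,k\}\}$, $I_{21}=\{s\in J_m: s=\frac{2n(2m+1)-(k-m)}{2k+1}\text{ for some }n\in J_{k/2}\}$, $I_{22}=\{s\in J_m: 2m+1-s=\frac{2n(2m+1)-(k-m)}{2k+1}\text{ for some }n\in\{k/2+1,\dots,k\}\}$. Then $I_{21}=\{m\}$ and $I_{11}=I_{12}=I_{22}=\emptyset$. *)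

theory Defs
  imports Complex_Main
begin

definition J :: "nat \<Rightarrow> nat set" where "J \<mu> = {1..\<mu>}"

definition I11 :: "nat \<Rightarrow> nat \<Rightarrow> nat set" where
  "I11 k m = {s \<in> J m. \<exists>n \<in> J (k div 2).
     (of_nat s :: rat) = ((of_int :: int \<Rightarrow> rat) (2 * int n * (2 * int m + 1) + int k - int m)) / (of_nat (2*k+1) :: rat)}"

definition I12 :: "nat \<Rightarrow> nat \<Rightarrow> nat set" where
  "I12 k m = {s \<in> J m. \<exists>n \<in> {k div 2 + 1..k}.
     (of_int :: int \<Rightarrow> rat) (2 * int m + 1 - int s) = ((of_int :: int \<Rightarrow> rat) (2 * int n * (2 * int m + 1) + int k - int m)) / (of_nat (2*k+1) :: rat)}"

definition I21 :: "nat \<Rightarrow> nat \<Rightarrow> nat set" where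
  "I21 k m = {s \<in> J m. \<exists>n \<in> J (k div 2).
     (of_nat s :: rat) = ((of_int :: int \<Rightarrow> rat) (2 * int n * (2 * int m + 1) - (int k - int m))) / (of_nat (2*k+1) :: rat)}"

definition I22 :: "nat \<Rightarrow> nat \<Rightarrow> nat set" where
  "I22 k m = {s \<in> J m. \<exists>n \<in> {k div 2 + 1..k}.
     (of_int :: int \<Rightarrow> rat) (2 * int m + 1 - int s) = ((of_int :: int \<Rightarrow> rat) (2 * int n * (2 * int m + 1) - (int k - int m))) / (of_nat (2*k+1) :: rat)}"

end

theory Submission
  imports Defs
begin

lemma key:
  assumes "(of_int a :: rat) = of_int b / of_nat K" "K > 0"
  shows "a * int K = b"
proof -
  have "(of_int a :: rat) * of_nat K = of_int b" using assms by (simp add: field_simps)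
  hence "(of_int (a * int K) :: rat) = of_int b" by simp
  thus ?thesis by (simp only: of_int_eq_iff)
qed

lemma dvd_range:
  fixes M x :: int
  assumes "M dvd x" "0 \<le> x" "x < M"
  shows "x = 0"
proof -
  obtain q where q: "x = M * q" using assms(1) by blast
  have "M > 0" using assms by linarith
  show ?thesis
  proof (cases "q = 0")
    case False
    hence "q \<ge> 1 \<or> q \<le> -1" by linarith
    thus ?thesis
    proof
      assume "q \<ge> 1"
      hence "M * 1 \<le> M * q" using \<open>M > 0\<close> by (intro mult_left_mono) auto
      thus ?thesis using q assms by linarith
    next
      assume "q \<le> -1"
      hence "M * q \<le> M * (-1)" using \<open>M > 0\<close> by (intro mult_left_mono) auto
      thus ?thesis using q assms \<open>M > 0\<close> by linarith
    qed
  qed (use q in simp)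
qed

theorem lemma3p11:
  fixes k m :: nat
  assumes "m < k" and "k \<le> 2 * m" and "even k"
    and "gcd (2 * k + 1) (2 * (2 * m + 1)) = 1"
  shows "I21 k m = {m} \<and> I11 k m = {} \<and> I12 k m = {} \<and> I22 k m = {}"
proof -
  define K where "K = 2 * int k + 1"
  define M where "M = 2 * int m + 1"
  have "coprime (2 * k + 1) (2 * m + 1)"
  proof -
    have "coprime (2 * k + 1) (2 * (2 * m + 1))" using assms(4) by (simp only: coprime_iff_gcd_eq_1)
    thus ?thesis using coprime_mult_right_iff by blast
  qed
  hence "coprime (int (2 * m + 1)) (int (2 * k + 1))" by (metis coprime_int_iff coprime_commute)
  moreover have "int (2 * m + 1) = M" "int (2 * k + 1) = K" unfolding M_def K_def by simp_all
  ultimately have cop: "coprime M K" by simp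
  have Kpos: "(2*k+1) > (0::nat)" by simp
  have Kc: "int (2*k+1) = K" unfolding K_def by simp
  obtain h where h: "k = 2 * h" using assms(3) by blast
  have m1: "m \<ge> 1" using assms by linarith
  have gen: "s + m = 0" if "M dvd (int s + int m) * K" "s \<in> J m" for s
  proof -
    have "M dvd int s + int m" using that(1) cop coprime_dvd_mult_left_iff by blast
    moreover have "int s + int m < M" using that(2) unfolding J_def M_def by auto
    ultimately show ?thesis using dvd_range[of M "int s + int m"] by simp
  qed
  have A: "I21 k m = {m}"
  proof
    show "I21 k m \<subseteq> {m}"
    proof
      fix s assume "s \<in> I21 k m"
      then obtain n where s: "s \<in> J m" and n: "n \<in> J (k div 2)"
        and e: "(of_int (int s) :: rat) = of_int (2 * int n * (2 * int m + 1) - (int k - int m)) / of_nat (2*k+1)"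
        unfolding I21_def by auto
      have "int s * K = 2 * int n * (2 * int m + 1) - (int k - int m)"
        using key[OF e Kpos] Kc by simp
      hence "(int s - int m) * K = (2 * int n - int k) * M" unfolding K_def M_def
        by (simp add: algebra_simps)
      hence "M dvd (int s - int m) * K" by (metis dvd_triv_right)
      hence d: "M dvd int s - int m" using cop coprime_dvd_mult_left_iff by blast
      have "\<bar>int s - int m\<bar> < M" using s unfolding J_def M_def by auto
      have "int s - int m = 0"
      proof (cases "int s - int m \<ge> 0")
        case True thus ?thesis using dvd_range[OF d] \<open>\<bar>int s - int m\<bar> < M\<close> by simp
      next
        case False
        have "M dvd int m - int s" using d by (metis dvd_minus_iff minus_diff_eq)
        moreover have "0 \<le> int m - int s" "int m - int s < M"
          using \<open>\<bar>int s - int m\<bar> < M\<close> False by linarith+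
        ultimately have "int m - int s = 0" by (rule dvd_range)
        thus ?thesis by linarith
      qed
      thus "s \<in> {m}" by simp
    qed
  next
    have "m \<in> J m" using m1 unfolding J_def by simp
    moreover have "h \<in> J (k div 2)" using h assms unfolding J_def by auto
    moreover have "(of_int (int m) :: rat) = of_int (2 * int h * (2 * int m + 1) - (int k - int m)) / of_nat (2*k+1)"
    proof -
      have "int m * int (2*k+1) = 2 * int h * (2 * int m + 1) - (int k - int m)"
        using h by (simp add: algebra_simps)
      hence "(of_int (int m) :: rat) * of_nat (2*k+1) = of_int (2 * int h * (2 * int m + 1) - (int k - int m))"
        by (metis of_int_mult of_int_of_nat_eq)
      thus ?thesis by (simp add: field_simps)
    qed
    ultimately show "{m} \<subseteq> I21 k m" unfolding I21_def by auto
  qed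
  have B: "I11 k m = {}"
  proof (rule ccontr)
    assume "I11 k m \<noteq> {}"
    then obtain s n where s: "s \<in> J m" and n: "n \<in> J (k div 2)"
        and e: "(of_int (int s) :: rat) = of_int (2 * int n * (2 * int m + 1) + int k - int m) / of_nat (2*k+1)"
        unfolding I11_def by auto
    have "int s * K = 2 * int n * (2 * int m + 1) + int k - int m"
      using key[OF e Kpos] Kc by simp
    hence "(int s + int m) * K = (2 * int n + int k) * M" unfolding K_def M_def
      by (simp add: algebra_simps)
    hence "M dvd (int s + int m) * K" by (metis dvd_triv_right)
    hence "s + m = 0" using gen s by blast
    thus False using s unfolding J_def by auto
  qed
  have C: "I12 k m = {}"
  proof (rule ccontr)
    assume "I12 k m \<noteq> {}"
    then obtain s n where s: "s \<in> J m" and n: "n \<in> {k div 2 + 1..k}"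
        and e: "(of_int (2 * int m + 1 - int s) :: rat) = of_int (2 * int n * (2 * int m + 1) + int k - int m) / of_nat (2*k+1)"
        unfolding I12_def by auto
    have "(2 * int m + 1 - int s) * K = 2 * int n * (2 * int m + 1) + int k - int m"
      using key[OF e Kpos] Kc by simp
    hence eq: "(M + int m - int s) * K = (2 * int n + int k) * M" unfolding K_def M_def
      by (simp add: algebra_simps)
    hence "(int m - int s) * K = (2 * int n + int k - K) * M"
      by (simp add: algebra_simps)
    hence "M dvd (int m - int s) * K" by (metis dvd_triv_right)
    hence d: "M dvd int m - int s" using cop coprime_dvd_mult_left_iff by blast
    have "int m - int s < M" "int m - int s \<ge> 0" using s unfolding J_def M_def by auto
    hence "int m - int s = 0" using dvd_range[OF d] by simp
    hence "M * K = (2 * int n + int k) * M" using eq by simp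
    hence "K = 2 * int n + int k" unfolding M_def by simp
    hence "4 * int h + 1 = 2 * int n + 2 * int h" unfolding K_def using h by simp
    thus False by presburger
  qed
  have D: "I22 k m = {}"
  proof (rule ccontr)
    assume "I22 k m \<noteq> {}"
    then obtain s n where s: "s \<in> J m" and n: "n \<in> {k div 2 + 1..k}"
        and e: "(of_int (2 * int m + 1 - int s) :: rat) = of_int (2 * int n * (2 * int m + 1) - (int k - int m)) / of_nat (2*k+1)"
        unfolding I22_def by auto
    have "(2 * int m + 1 - int s) * K = 2 * int n * (2 * int m + 1) - (int k - int m)"
      using key[OF e Kpos] Kc by simp
    hence "(int s + int m) * K = (K + int k - 2 * int n) * M" unfolding K_def M_def
      by (simp add: algebra_simps)
    hence "M dvd (int s + int m) * K" by (metis dvd_triv_right)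
    hence "s + m = 0" using gen s by blast
    thus False using s unfolding J_def by auto
  qed
  show ?thesis using A B C D by blast
qed

end
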